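(* Let $k$ be a field, $Q=(Q_0,Q_1)$ a quiver, and $\widehat{T}_{\Sigma}(V)$ the associated complete tensor algebra (complete path algebra). Let $G$ be a homogeneous group of continuous algebra automorphisms of $\widehat{T}_{\Sigma}(V)$ which is invariant on $\Sigma$. Let $\omega$ be a space of path of length $m\ge 1$, and fix, for every subpath $\omega'$ of $\omega$, a space of irreducible invariants $V^G_{\omega',\mathrm{irr}}$. Then the canonical map $$\psi_{\omega}:\bigoplus_{p} V^G_{\omega,p,\mathrm{irr}}\longrightarrow V^G_{\omega},$$ where $p$ runs through all ordered partitions of $m$, is surjective.
   Context: $k$ is a discrete topological field. For $i,j\in Q_0$, $VQ_{i,j}$ is the $k$-vector space spanned by the arrows of $Q$ from $i$ to $j$. $\Sigma=\prod_{i\in Q_0}ke_i$ (a topologically semisimple pseudocompact algebra), $V=\prod_{i,j\in Q_0}VQ_{i,j}$ (a pseudocompact $\Sigma$-bimodule), $V^{\widehat{\otimes}_0}=\Sigma$, $V^{\widehat{\otimes}_n}=V\widehat{\otimes}_{\Sigma}V^{\widehat{\otimes}_{n-1}}$ (completed tensor product over $\Sigma$), and $\widehat{T}_{\Sigma}(V)=\prod_{n\ge0}V^{\widehat{\otimes}_n}$ with the product topology and multiplication given by the completed tensor product. A continuous algebra automorphism $g$ is homogeneous if $g(V^{\widehat{\otimes}_n})=V^{\widehat{\otimes}_n}$ for all $n\in\mathbb{N}$; a group is homogeneous if all its elements are. $G$ is invariant on $\Sigma$ means every element of $G$ acts as the identity on $\Sigma$; then each $V^{\widehat{\otimes}_n}$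 is a $kG$-module and $G$ preserves the subspaces below. For a $G$-stable subspace $W$, $W^G$ denotes the fixed points. An arrow space is a nonzero $V_a=VQ_{i,j}$ (from $i$ to $j$). For a sequence of arrow spaces $V_{a_1},\dots,V_{a_m}$ with $V_{a_n}=VQ_{i_{n-1},i_n}$, the space $V_\omega=V_{a_m}\widehat{\otimes}_\Sigma\cdots\widehat{\otimes}_\Sigma V_{a_1}\subseteq V^{\widehat{\otimes}_m}$ is a space of path $\omega$ from $i_0$ to $i_m$ of length $m$; spaces of paths contained in $V_\omega$ of the form $V_{a_t}\widehat{\otimes}_\Sigma\cdots\widehat{\otimes}_\Sigma V_{a_s}$ are its subpaths. A 2-partition $\omega=\omega_2\omega_1$ is a pair of subpaths with $V_\omega=V_{\omega_2}\widehat{\otimes}_\Sigma V_{\omega_1}$; $\varphi_{\omega_1,\omega_2}:V^G_{\omega_2}\widehat{\otimes}_\Sigma V^G_{\omega_1}\to V^G_\omega$ is the canonical map (multiplication), and $\varphi_\omega=\sum_{\omega_2\omega_1=\omega}\varphi_{\omega_1,\omega_2}$. The image of $\varphi_\omega$ is the space of composite invariants, and a space of irreducible invariants $V^G_{\omega,\mathrm{irr}}$ is any fixed complement of $\mathrm{Im}\,\varphi_\omega$ in $V^G_\omega$ (for length $1$, $\varphi_\omega=0$ and $V^G_{\omega,\mathrm{irr}}=V^G_\omega$). For an ordered partition $p=(m_l,\dots,m_1)$ of $m$ into positive integers, write $\omega=\omega_{m_l}\cdots\omega_{m_1}$ with $\omega_{m_t}$ the unique subpath of length $m_t$ in this position,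 and set $V^G_{\omega,p,\mathrm{irr}}=V^G_{\omega_{m_l},\mathrm{irr}}\widehat{\otimes}_\Sigma\cdots\widehat{\otimes}_\Sigma V^G_{\omega_{m_1},\mathrm{irr}}$. The map $\psi_\omega$ is the sum of the canonical (multiplication) maps $V^G_{\omega,p,\mathrm{irr}}\to V^G_\omega$. *)

theory Defs
  imports "HOL-Analysis.Analysis"
begin

(* A path is a pair (i, [a1,...,am]) : start vertex i, arrows in order of
   traversal (a1 first).  The complete path algebra \<widehat>T_\<Sigma>(V) is modelled
   as functions from paths to k vanishing on non-composable pairs
   (= \<Prod>_n V^{\<otimes>n} for a locally finite quiver). *)

fun pvalid :: "('a \<Rightarrow> 'v) \<Rightarrow> ('a \<Rightarrow> 'v) \<Rightarrow> 'v \<Rightarrow> 'a list \<Rightarrow> bool" where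
  "pvalid s t i [] = True"
| "pvalid s t i (a # as) = (s a = i \<and> pvalid s t (t a) as)"

fun pend :: "('a \<Rightarrow> 'v) \<Rightarrow> 'v \<Rightarrow> 'a list \<Rightarrow> 'v" where
  "pend t i [] = i"
| "pend t i (a # as) = pend t (t a) as"

fun pverts :: "('a \<Rightarrow> 'v) \<Rightarrow> 'v \<Rightarrow> 'a list \<Rightarrow> 'v list" where
  "pverts t i [] = [i]"
| "pverts t i (a # as) = i # pverts t (t a) as"

definition cpa_carrier :: "('a \<Rightarrow> 'v) \<Rightarrow> ('a \<Rightarrow> 'v) \<Rightarrow> ('v \<times> 'a list \<Rightarrow> 'k::field) set" where
  "cpa_carrier s t = {f. \<forall>i as. \<not> pvalid s t i as \<longrightarrow> f (i, as) = 0}"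

definition cpa_zero :: "'v \<times> 'a list \<Rightarrow> 'k::field" where
  "cpa_zero = (\<lambda>_. 0)"

definition cpa_add :: "('v \<times> 'a list \<Rightarrow> 'k::field) \<Rightarrow> ('v \<times> 'a list \<Rightarrow> 'k) \<Rightarrow> ('v \<times> 'a list \<Rightarrow> 'k)" where
  "cpa_add f g = (\<lambda>p. f p + g p)"

definition cpa_scale :: "'k::field \<Rightarrow> ('v \<times> 'a list \<Rightarrow> 'k) \<Rightarrow> ('v \<times> 'a list \<Rightarrow> 'k)" where
  "cpa_scale c f = (\<lambda>p. c * f p)"

(* multiplication: (f \<cdot> g) = f after g, i.e. g lives on the first part of the path *)
definition cpa_mult :: "('a \<Rightarrow> 'v) \<Rightarrow> ('v \<times> 'a list \<Rightarrow> 'k::field) \<Rightarrow> ('v \<times> 'a list \<Rightarrow> 'k) \<Rightarrow> ('v \<times> 'a list \<Rightarrow> 'k)" where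
  "cpa_mult t f g = (\<lambda>(i, as). \<Sum>j\<le>length as. f (pend t i (take j as), drop j as) * g (i, take j as))"

definition cpa_one :: "'v \<times> 'a list \<Rightarrow> 'k::field" where
  "cpa_one = (\<lambda>(i, as). if as = [] then 1 else 0)"

definition cpa_top :: "('v \<times> 'a list \<Rightarrow> 'k::field) topology" where
  "cpa_top = product_topology (\<lambda>_. discrete_topology UNIV) UNIV"

definition cpa_deg :: "('a \<Rightarrow> 'v) \<Rightarrow> ('a \<Rightarrow> 'v) \<Rightarrow> nat \<Rightarrow> ('v \<times> 'a list \<Rightarrow> 'k::field) set" where
  "cpa_deg s t n = {f \<in> cpa_carrier s t. \<forall>i as. f (i, as) \<noteq> 0 \<longrightarrow> length as = n}"

definition cpa_aut :: "('a \<Rightarrow> 'v) \<Rightarrow> ('a \<Rightarrow> 'v) \<Rightarrow> (('v \<times> 'a list \<Rightarrow> 'k::field) \<Rightarrow> ('v \<times> 'a list \<Rightarrow> 'k)) \<Rightarrow> bool" where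
  "cpa_aut s t g \<longleftrightarrow>
     bij_betw g (cpa_carrier s t) (cpa_carrier s t)
   \<and> (\<forall>f\<in>cpa_carrier s t. \<forall>h\<in>cpa_carrier s t. g (cpa_add f h) = cpa_add (g f) (g h))
   \<and> (\<forall>c. \<forall>f\<in>cpa_carrier s t. g (cpa_scale c f) = cpa_scale c (g f))
   \<and> (\<forall>f\<in>cpa_carrier s t. \<forall>h\<in>cpa_carrier s t. g (cpa_mult t f h) = cpa_mult t (g f) (g h))
   \<and> g cpa_one = cpa_one
   \<and> continuous_map (subtopology cpa_top (cpa_carrier s t)) (subtopology cpa_top (cpa_carrier s t)) g"

definition cpa_aut_group :: "('a \<Rightarrow> 'v) \<Rightarrow> ('a \<Rightarrow> 'v) \<Rightarrow> (('v \<times> 'a list \<Rightarrow> 'k::field) \<Rightarrow> ('v \<times> 'a list \<Rightarrow> 'k)) set \<Rightarrow> bool" where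
  "cpa_aut_group s t G \<longleftrightarrow>
     (\<forall>g\<in>G. cpa_aut s t g)
   \<and> (\<exists>e\<in>G. \<forall>f\<in>cpa_carrier s t. e f = f)
   \<and> (\<forall>g\<in>G. \<forall>h\<in>G. \<exists>c\<in>G. \<forall>f\<in>cpa_carrier s t. c f = g (h f))
   \<and> (\<forall>g\<in>G. \<exists>h\<in>G. \<forall>f\<in>cpa_carrier s t. h (g f) = f)"

definition homogeneous_group :: "('a \<Rightarrow> 'v) \<Rightarrow> ('a \<Rightarrow> 'v) \<Rightarrow> (('v \<times> 'a list \<Rightarrow> 'k::field) \<Rightarrow> ('v \<times> 'a list \<Rightarrow> 'k)) set \<Rightarrow> bool" where
  "homogeneous_group s t G \<longleftrightarrow> (\<forall>g\<in>G. \<forall>n. g ` cpa_deg s t n = cpa_deg s t n)"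

(* acts as the identity on \<Sigma> = V^{\<otimes>0} *)
definition invariant_on_Sigma :: "('a \<Rightarrow> 'v) \<Rightarrow> ('a \<Rightarrow> 'v) \<Rightarrow> (('v \<times> 'a list \<Rightarrow> 'k::field) \<Rightarrow> ('v \<times> 'a list \<Rightarrow> 'k)) set \<Rightarrow> bool" where
  "invariant_on_Sigma s t G \<longleftrightarrow> (\<forall>g\<in>G. \<forall>f\<in>cpa_deg s t 0. g f = f)"

(* a space of path is given by its vertex sequence i_0,...,i_m (m \<ge> 1),
   with every arrow space VQ_{i_{n-1},i_n} nonzero *)
definition is_path_space :: "('a \<Rightarrow> 'v) \<Rightarrow> ('a \<Rightarrow> 'v) \<Rightarrow> 'v list \<Rightarrow> bool" where
  "is_path_space s t w \<longleftrightarrow> 2 \<le> length w \<and>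
     (\<forall>n < length w - 1. \<exists>a. s a = w ! n \<and> t a = w ! Suc n)"

definition Vsp :: "('a \<Rightarrow> 'v) \<Rightarrow> ('a \<Rightarrow> 'v) \<Rightarrow> 'v list \<Rightarrow> ('v \<times> 'a list \<Rightarrow> 'k::field) set" where
  "Vsp s t w = {f \<in> cpa_carrier s t. \<forall>i as. f (i, as) \<noteq> 0 \<longrightarrow> pverts t i as = w}"

definition VG :: "('a \<Rightarrow> 'v) \<Rightarrow> ('a \<Rightarrow> 'v) \<Rightarrow> (('v \<times> 'a list \<Rightarrow> 'k::field) \<Rightarrow> ('v \<times> 'a list \<Rightarrow> 'k)) set \<Rightarrow> 'v list \<Rightarrow> ('v \<times> 'a list \<Rightarrow> 'k) set" where
  "VG s t G w = {f \<in> Vsp s t w. \<forall>g\<in>G. g f = f}"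

definition subpaths :: "'v list \<Rightarrow> 'v list set" where
  "subpaths w = {take (r - q + 1) (drop q w) | q r. q < r \<and> r < length w}"

definition cpa_span :: "('v \<times> 'a list \<Rightarrow> 'k::field) set \<Rightarrow> ('v \<times> 'a list \<Rightarrow> 'k) set" where
  "cpa_span S = {f. \<exists>F c. finite F \<and> F \<subseteq> S \<and> f = (\<lambda>p. \<Sum>x\<in>F. c x * x p)}"

definition cpa_subspace :: "('v \<times> 'a list \<Rightarrow> 'k::field) set \<Rightarrow> bool" where
  "cpa_subspace S \<longleftrightarrow> cpa_zero \<in> S \<and> (\<forall>x\<in>S. \<forall>y\<in>S. cpa_add x y \<in> S)
     \<and> (\<forall>c. \<forall>x\<in>S. cpa_scale c x \<in> S)"

definition cpa_msum :: "('v \<times> 'a list \<Rightarrow> 'k::field) set \<Rightarrow> ('v \<times> 'a list \<Rightarrow> 'k) set \<Rightarrow> ('v \<times> 'a list \<Rightarrow> 'k) set" where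
  "cpa_msum S T = {cpa_add x y | x y. x \<in> S \<and> y \<in> T}"

(* Im \<phi>_\<omega>: image of \<Sum>_{\<omega>=\<omega>2\<omega>1} V^G_{\<omega>2} \<otimes> V^G_{\<omega>1} \<rightarrow> V^G_\<omega>
   (the image of a map out of a tensor product is spanned by images of pure tensors) *)
definition composite_inv :: "('a \<Rightarrow> 'v) \<Rightarrow> ('a \<Rightarrow> 'v) \<Rightarrow> (('v \<times> 'a list \<Rightarrow> 'k::field) \<Rightarrow> ('v \<times> 'a list \<Rightarrow> 'k)) set \<Rightarrow> 'v list \<Rightarrow> ('v \<times> 'a list \<Rightarrow> 'k) set" where
  "composite_inv s t G w = cpa_span (\<Union>j\<in>{1..<length w - 1}.
      {cpa_mult t x y | x y. x \<in> VG s t G (drop j w) \<and> y \<in> VG s t G (take (Suc j) w)})"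

definition is_irr_space :: "('a \<Rightarrow> 'v) \<Rightarrow> ('a \<Rightarrow> 'v) \<Rightarrow> (('v \<times> 'a list \<Rightarrow> 'k::field) \<Rightarrow> ('v \<times> 'a list \<Rightarrow> 'k)) set \<Rightarrow> 'v list \<Rightarrow> ('v \<times> 'a list \<Rightarrow> 'k) set \<Rightarrow> bool" where
  "is_irr_space s t G w I \<longleftrightarrow> cpa_subspace I \<and> I \<subseteq> VG s t G w
     \<and> I \<inter> composite_inv s t G w = {cpa_zero}
     \<and> cpa_msum I (composite_inv s t G w) = VG s t G w"

(* ordered partitions of m, listed as [m_1, ..., m_l] (m_1 = first arrows) *)
definition ord_partitions :: "nat \<Rightarrow> nat list set" where
  "ord_partitions m = {ps. ps \<noteq> [] \<and> (\<forall>x\<in>set ps. 0 < x) \<and> sum_list ps = m}"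

(* \<omega>_{m_n}: the n-th block (counting from the start of the path) *)
definition segment :: "'v list \<Rightarrow> nat list \<Rightarrow> nat \<Rightarrow> 'v list" where
  "segment w ps n = take (ps ! n + 1) (drop (sum_list (take n ps)) w)"

(* product x_l \<cdot> ... \<cdot> x_1 of the list [x_1, ..., x_l] *)
fun cpa_prodl :: "('a \<Rightarrow> 'v) \<Rightarrow> ('v \<times> 'a list \<Rightarrow> 'k::field) list \<Rightarrow> ('v \<times> 'a list \<Rightarrow> 'k)" where
  "cpa_prodl t [] = cpa_one"
| "cpa_prodl t (x # xs) = cpa_mult t (cpa_prodl t xs) x"

definition psi_image :: "('a \<Rightarrow> 'v) \<Rightarrow> ('v list \<Rightarrow> ('v \<times> 'a list \<Rightarrow> 'k::field) set) \<Rightarrow> 'v list \<Rightarrow> ('v \<times> 'a list \<Rightarrow> 'k) set" where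
  "psi_image t Irr w = cpa_span (\<Union>ps\<in>ord_partitions (length w - 1).
      {cpa_prodl t xs | xs. length xs = length ps \<and> (\<forall>n<length ps. xs ! n \<in> Irr (segment w ps n))})"

end

theory Submission
  imports Defs
begin


lemma pend_append: "pend t i (l1 @ l2) = pend t (pend t i l1) l2"
  by (induction l1 arbitrary: i) auto

lemma pvalid_append: "pvalid s t i (l1 @ l2) = (pvalid s t i l1 \<and> pvalid s t (pend t i l1) l2)"
  by (induction l1 arbitrary: i) auto

lemma pverts_append: "pverts t i (l1 @ l2) = pverts t i l1 @ tl (pverts t (pend t i l1) l2)"
proof (induction l1 arbitrary: i)
  case Nil show ?case by (cases l2) auto
next
  case (Cons a l1) then show ?case by simp
qed

lemma mult_one_left: fixes t :: "'a \<Rightarrow> 'v" shows "cpa_mult t cpa_one x = x"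
proof (rule ext, clarify)
  fix i and as :: "'a list"
  have "cpa_mult t cpa_one x (i, as) = (\<Sum>j\<le>length as. (if j = length as then x (i, as) else 0))"
    unfolding cpa_mult_def cpa_one_def by (simp only: prod.case) (rule sum.cong; auto)
  also have "\<dots> = x (i, as)" by simp
  finally show "cpa_mult t cpa_one x (i, as) = x (i, as)" .
qed

lemma mult_one_right: fixes t :: "'a \<Rightarrow> 'v" shows "cpa_mult t x cpa_one = x"
proof (rule ext, clarify)
  fix i and as :: "'a list"
  have "cpa_mult t x cpa_one (i, as) = (\<Sum>j\<le>length as. (if j = 0 then x (i, as) else 0))"
    unfolding cpa_mult_def cpa_one_def by (simp only: prod.case) (rule sum.cong; auto)
  also have "\<dots> = x (i, as)" by simp
  finally show "cpa_mult t x cpa_one (i, as) = x (i, as)" .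
qed

lemma mult_add_left: "cpa_mult t (cpa_add f g) h = cpa_add (cpa_mult t f h) (cpa_mult t g h)"
  unfolding cpa_mult_def cpa_add_def by (auto simp: sum.distrib ring_distribs)

lemma mult_add_right: "cpa_mult t h (cpa_add f g) = cpa_add (cpa_mult t h f) (cpa_mult t h g)"
  unfolding cpa_mult_def cpa_add_def by (auto simp: sum.distrib ring_distribs)

lemma mult_scale_left: "cpa_mult t (cpa_scale c f) h = cpa_scale c (cpa_mult t f h)"
  unfolding cpa_mult_def cpa_scale_def by (auto simp: sum_distrib_left mult.assoc)

lemma mult_scale_right: "cpa_mult t h (cpa_scale c f) = cpa_scale c (cpa_mult t h f)"
  unfolding cpa_mult_def cpa_scale_def by (auto simp: sum_distrib_left mult_ac)

lemma mult_zero_left: "cpa_mult t cpa_zero h = cpa_zero"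
  unfolding cpa_mult_def cpa_zero_def by auto

lemma mult_zero_right: "cpa_mult t h cpa_zero = cpa_zero"
  unfolding cpa_mult_def cpa_zero_def by auto

lemma tri_sum:
  fixes G :: "nat \<Rightarrow> nat \<Rightarrow> 'k::comm_monoid_add"
  shows "(\<Sum>l\<le>n. \<Sum>j\<le>n - l. G l j) = (\<Sum>k\<le>n. \<Sum>l\<le>k. G l (k - l))"
proof -
  have "(\<Sum>l\<le>n. \<Sum>j\<le>n - l. G l j) = (\<Sum>(l,j)\<in>Sigma {..n} (\<lambda>l. {..n-l}). G l j)"
    by (rule sum.Sigma) auto
  also have "Sigma {..n} (\<lambda>l. {..n-l}) = {(i,j). i+j \<le> n}" by auto
  also have "(\<Sum>(l,j)\<in>{(i,j). i+j \<le> n}. G l j) = (\<Sum>k\<le>n. \<Sum>l\<le>k. G l (k - l))"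
    by (rule sum.triangle_reindex_eq)
  finally show ?thesis .
qed

lemma mult_assoc: fixes t :: "'a \<Rightarrow> 'v" shows "cpa_mult t (cpa_mult t f g) h = cpa_mult t f (cpa_mult t g h)"
proof (rule ext, clarify)
  fix i and as :: "'a list"
  define n where "n = length as"
  define G where "G l j' = f (pend t (pend t i (take l as)) (take j' (drop l as)), drop j' (drop l as))
     * g (pend t i (take l as), take j' (drop l as)) * h (i, take l as)" for l j'
  have "cpa_mult t (cpa_mult t f g) h (i, as) = (\<Sum>l\<le>n. \<Sum>j\<le>n - l. G l j)"
    unfolding cpa_mult_def G_def n_def by (auto simp: sum_distrib_right)
  also have "\<dots> = (\<Sum>k\<le>n. \<Sum>l\<le>k. G l (k - l))" by (rule tri_sum)
  also have "\<dots> = (\<Sum>k\<le>n. \<Sum>l\<le>k. f (pend t i (take k as), drop k as) *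
         (g (pend t i (take l (take k as)), drop l (take k as)) * h (i, take l (take k as))))"
  proof (intro sum.cong refl)
    fix k l assume k: "k \<in> {..n}" and l: "l \<in> {..k}"
    have tk: "take k as = take l as @ take (k - l) (drop l as)"
      using l by (metis atMost_iff le_add_diff_inverse take_add)
    have e1: "drop k as = drop (k - l) (drop l as)" using l by simp
    have e2: "take l (take k as) = take l as" using l by simp
    have e3: "drop l (take k as) = take (k - l) (drop l as)" by (simp add: drop_take)
    have "pend t i (take k as) = pend t (pend t i (take l as)) (take (k - l) (drop l as))"
      by (subst tk) (simp add: pend_append)
    then show "G l (k - l) = f (pend t i (take k as), drop k as) *
         (g (pend t i (take l (take k as)), drop l (take k as)) * h (i, take l (take k as)))"
      unfolding G_def using e1 e2 e3 by (simp add: mult_ac)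
  qed
  also have "\<dots> = cpa_mult t f (cpa_mult t g h) (i, as)"
    unfolding cpa_mult_def by (simp add: n_def sum_distrib_left)
  finally show "cpa_mult t (cpa_mult t f g) h (i, as) = cpa_mult t f (cpa_mult t g h) (i, as)" .
qed

lemma prodl_append: "cpa_prodl t (ys @ xs) = cpa_mult t (cpa_prodl t xs) (cpa_prodl t ys)"
  by (induction ys) (simp_all add: mult_one_right mult_assoc)



lemma span_subspace: "cpa_subspace (cpa_span S)"
  unfolding cpa_subspace_def
proof (intro conjI ballI allI)
  show "cpa_zero \<in> cpa_span S"
    unfolding cpa_span_def cpa_zero_def by (rule CollectI, rule exI[of _ "{}"]) auto
next
  fix x y assume x: "x \<in> cpa_span S" and y: "y \<in> cpa_span S"
  then obtain F1 c1 F2 c2 where F1: "finite F1" "F1 \<subseteq> S" "x = (\<lambda>p. \<Sum>z\<in>F1. c1 z * z p)"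
    and F2: "finite F2" "F2 \<subseteq> S" "y = (\<lambda>p. \<Sum>z\<in>F2. c2 z * z p)"
    unfolding cpa_span_def by blast
  define c where "c z = (if z \<in> F1 then c1 z else 0) + (if z \<in> F2 then c2 z else 0)" for z
  have "cpa_add x y = (\<lambda>p. \<Sum>z\<in>F1 \<union> F2. c z * z p)"
  proof
    fix p
    have "(\<Sum>z\<in>F1 \<union> F2. c z * z p) = (\<Sum>z\<in>F1 \<union> F2. (if z \<in> F1 then c1 z * z p else 0))
        + (\<Sum>z\<in>F1 \<union> F2. (if z \<in> F2 then c2 z * z p else 0))"
      unfolding sum.distrib[symmetric] by (rule sum.cong) (simp_all add: c_def ring_distribs)
    also have "\<dots> = (\<Sum>z\<in>F1. c1 z * z p) + (\<Sum>z\<in>F2. c2 z * z p)"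
      using F1(1) F2(1)
      by (simp add: sum.inter_restrict[symmetric] Int_absorb1 Int_absorb2 Int_commute)
    finally show "cpa_add x y p = (\<Sum>z\<in>F1 \<union> F2. c z * z p)"
      using F1 F2 unfolding cpa_add_def by simp
  qed
  then show "cpa_add x y \<in> cpa_span S"
    unfolding cpa_span_def
    by (intro CollectI exI[of _ "F1 \<union> F2"] exI[of _ c]) (use F1(1,2) F2(1,2) in simp)
next
  fix a x assume x: "x \<in> cpa_span S"
  then obtain F c where F: "finite F" "F \<subseteq> S" "x = (\<lambda>p. \<Sum>z\<in>F. c z * z p)"
    unfolding cpa_span_def by blast
  have sc: "cpa_scale a x = (\<lambda>p. \<Sum>z\<in>F. (a * c z) * z p)"
    using F unfolding cpa_scale_def by (simp add: sum_distrib_left mult.assoc)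
  show "cpa_scale a x \<in> cpa_span S"
    unfolding cpa_span_def
    by (rule CollectI, rule exI[of _ F], rule exI[of _ "\<lambda>z. a * c z"]) (use F(1,2) sc in simp)
qed

lemma span_base: "x \<in> S \<Longrightarrow> x \<in> cpa_span S"
  unfolding cpa_span_def by (rule CollectI, rule exI[of _ "{x}"], rule exI[of _ "\<lambda>_. 1"]) auto

lemma span_least:
  assumes T: "cpa_subspace T" and ST: "S \<subseteq> T"
  shows "cpa_span S \<subseteq> T"
proof
  fix f assume "f \<in> cpa_span S"
  then obtain F c where F: "finite F" "F \<subseteq> S" "f = (\<lambda>p. \<Sum>z\<in>F. c z * z p)"
    unfolding cpa_span_def by blast
  have "F \<subseteq> S \<Longrightarrow> (\<lambda>p. \<Sum>z\<in>F. c z * z p) \<in> T"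
    using F(1)
  proof (induction F rule: finite_induct)
    case empty
    then show ?case using T unfolding cpa_subspace_def cpa_zero_def by simp
  next
    case (insert a F)
    have "(\<lambda>p. \<Sum>z\<in>insert a F. c z * z p) = cpa_add (cpa_scale (c a) a) (\<lambda>p. \<Sum>z\<in>F. c z * z p)"
      using insert unfolding cpa_add_def cpa_scale_def by auto
    moreover have "cpa_scale (c a) a \<in> T" using T insert ST unfolding cpa_subspace_def by auto
    ultimately show ?case using T insert unfolding cpa_subspace_def by auto
  qed
  then show "f \<in> T" using F by simp
qed

lemma bilinear_span:
  assumes U: "cpa_subspace U" and gen: "\<And>a b. a \<in> S \<Longrightarrow> b \<in> T \<Longrightarrow> cpa_mult t a b \<in> U"
    and x: "x \<in> cpa_span S" and y: "y \<in> cpa_span T"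
  shows "cpa_mult t x y \<in> U"
proof -
  have xb: "\<forall>b\<in>T. cpa_mult t x b \<in> U"
  proof
    fix b assume b: "b \<in> T"
    have "cpa_subspace {x. cpa_mult t x b \<in> U}" using U
      by (simp add: cpa_subspace_def mult_add_left mult_scale_left mult_zero_left)
    moreover have "S \<subseteq> {x. cpa_mult t x b \<in> U}" using gen b by auto
    ultimately have "cpa_span S \<subseteq> {x. cpa_mult t x b \<in> U}" by (rule span_least)
    then show "cpa_mult t x b \<in> U" using x by auto
  qed
  have "cpa_subspace {y. cpa_mult t x y \<in> U}" using U
    by (simp add: cpa_subspace_def mult_add_right mult_scale_right mult_zero_right)
  moreover have "T \<subseteq> {y. cpa_mult t x y \<in> U}" using xb by auto
  ultimately have "cpa_span T \<subseteq> {y. cpa_mult t x y \<in> U}" by (rule span_least)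
  then show ?thesis using y by auto
qed

lemma mult_carrier:
  assumes "x \<in> cpa_carrier s t" "y \<in> cpa_carrier s t"
  shows "cpa_mult t x y \<in> cpa_carrier s t"
  unfolding cpa_carrier_def
proof (intro CollectI allI impI)
  fix i as assume nv: "\<not> pvalid s t i as"
  have z: "\<And>j. x (pend t i (take j as), drop j as) * y (i, take j as) = 0"
  proof -
    fix j
    have "\<not> pvalid s t i (take j as) \<or> \<not> pvalid s t (pend t i (take j as)) (drop j as)"
      using nv pvalid_append[of s t i "take j as" "drop j as"] by simp
    then show "x (pend t i (take j as), drop j as) * y (i, take j as) = 0"
      using assms unfolding cpa_carrier_def by auto
  qed
  show "cpa_mult t x y (i, as) = 0" unfolding cpa_mult_def by (simp add: z)
qed

lemma mult_Vsp:
  assumes "x \<in> Vsp s t w2" "y \<in> Vsp s t w1"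
  shows "cpa_mult t x y \<in> Vsp s t (w1 @ tl w2)"
proof -
  have c: "cpa_mult t x y \<in> cpa_carrier s t" using assms mult_carrier unfolding Vsp_def by blast
  have "pverts t i as = w1 @ tl w2" if nz: "cpa_mult t x y (i, as) \<noteq> 0" for i as
  proof -
    obtain j where "x (pend t i (take j as), drop j as) * y (i, take j as) \<noteq> 0"
      using nz unfolding cpa_mult_def by (auto elim: sum.not_neutral_contains_not_neutral)
    then have "pverts t (pend t i (take j as)) (drop j as) = w2" "pverts t i (take j as) = w1"
      using assms unfolding Vsp_def by auto
    then show ?thesis using pverts_append[of t i "take j as" "drop j as"] by simp
  qed
  then show ?thesis using c unfolding Vsp_def by auto
qed

lemma aut_mult: "cpa_aut s t g \<Longrightarrow> f \<in> cpa_carrier s t \<Longrightarrow> h \<in> cpa_carrier s t \<Longrightarrow>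
  g (cpa_mult t f h) = cpa_mult t (g f) (g h)"
  unfolding cpa_aut_def by blast

lemma aut_add: "cpa_aut s t g \<Longrightarrow> f \<in> cpa_carrier s t \<Longrightarrow> h \<in> cpa_carrier s t \<Longrightarrow>
  g (cpa_add f h) = cpa_add (g f) (g h)"
  unfolding cpa_aut_def by blast

lemma aut_scale: "cpa_aut s t g \<Longrightarrow> f \<in> cpa_carrier s t \<Longrightarrow>
  g (cpa_scale c f) = cpa_scale c (g f)"
  unfolding cpa_aut_def by blast

lemma mult_VG:
  assumes aut: "\<forall>g\<in>G. cpa_aut s t g" and x: "x \<in> VG s t G w2" and y: "y \<in> VG s t G w1"
  shows "cpa_mult t x y \<in> VG s t G (w1 @ tl w2)"
proof -
  have xv: "x \<in> Vsp s t w2" and yv: "y \<in> Vsp s t w1" using x y unfolding VG_def by blast+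
  have xy: "x \<in> cpa_carrier s t" "y \<in> cpa_carrier s t" using xv yv unfolding Vsp_def by blast+
  have gx: "\<forall>g\<in>G. g x = x" and gy: "\<forall>g\<in>G. g y = y" using x y unfolding VG_def by blast+
  have v: "cpa_mult t x y \<in> Vsp s t (w1 @ tl w2)" by (rule mult_Vsp[OF xv yv])
  have gfix: "g (cpa_mult t x y) = cpa_mult t x y" if g: "g \<in> G" for g
  proof -
    have "cpa_aut s t g" using aut g by blast
    then have "g (cpa_mult t x y) = cpa_mult t (g x) (g y)" using xy by (rule aut_mult)
    moreover have "g x = x" "g y = y" using gx gy g by blast+
    ultimately show ?thesis by simp
  qed
  show ?thesis unfolding VG_def using v gfix by blast
qed

lemma VG_subspace:
  assumes aut: "\<forall>g\<in>G. cpa_aut s t g"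
  shows "cpa_subspace (VG s t G w)"
proof -
  have zc: "cpa_zero \<in> cpa_carrier s t" unfolding cpa_carrier_def cpa_zero_def by simp
  have zv: "cpa_zero \<in> Vsp s t w" using zc unfolding Vsp_def cpa_zero_def by simp
  have sz: "cpa_scale 0 cpa_zero = cpa_zero" unfolding cpa_scale_def cpa_zero_def by simp
  have gz: "g cpa_zero = cpa_zero" if "g \<in> G" for g
  proof -
    have "g (cpa_scale 0 cpa_zero) = cpa_scale 0 (g cpa_zero)" using aut that zc aut_scale by blast
    then show ?thesis using sz unfolding cpa_scale_def cpa_zero_def by simp
  qed
  have addv: "cpa_add x y \<in> Vsp s t w" if "x \<in> Vsp s t w" "y \<in> Vsp s t w" for x y
  proof -
    have c: "cpa_add x y \<in> cpa_carrier s t" using that unfolding Vsp_def cpa_carrier_def cpa_add_def by auto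
    have "pverts t i as = w" if nz: "cpa_add x y (i, as) \<noteq> 0" for i as
    proof -
      have "x (i, as) \<noteq> 0 \<or> y (i, as) \<noteq> 0" using nz unfolding cpa_add_def by auto
      then show ?thesis using \<open>x \<in> Vsp s t w\<close> \<open>y \<in> Vsp s t w\<close> unfolding Vsp_def by blast
    qed
    then show ?thesis using c unfolding Vsp_def by blast
  qed
  have scv: "cpa_scale c x \<in> Vsp s t w" if "x \<in> Vsp s t w" for c x
    using that unfolding Vsp_def cpa_carrier_def cpa_scale_def by auto
  have vc: "Vsp s t w \<subseteq> cpa_carrier s t" unfolding Vsp_def by auto
  show ?thesis unfolding cpa_subspace_def VG_def
  proof (intro conjI ballI allI)
    show "cpa_zero \<in> {f \<in> Vsp s t w. \<forall>g\<in>G. g f = f}" using zv gz by auto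
  next
    fix x y assume x: "x \<in> {f \<in> Vsp s t w. \<forall>g\<in>G. g f = f}" and y: "y \<in> {f \<in> Vsp s t w. \<forall>g\<in>G. g f = f}"
    have "g (cpa_add x y) = cpa_add x y" if g: "g \<in> G" for g
    proof -
      have "g (cpa_add x y) = cpa_add (g x) (g y)" using aut g x y vc aut_add by blast
      then show ?thesis using x y g by simp
    qed
    then show "cpa_add x y \<in> {f \<in> Vsp s t w. \<forall>g\<in>G. g f = f}"
      using addv x y by auto
  next
    fix c x assume x: "x \<in> {f \<in> Vsp s t w. \<forall>g\<in>G. g f = f}"
    have "g (cpa_scale c x) = cpa_scale c x" if g: "g \<in> G" for g
    proof -
      have "g (cpa_scale c x) = cpa_scale c (g x)" using aut g x vc aut_scale by blast
      then show ?thesis using x g by simp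
    qed
    then show "cpa_scale c x \<in> {f \<in> Vsp s t w. \<forall>g\<in>G. g f = f}"
      using scv x by auto
  qed
qed



lemma sum_take_le: "sum_list (take k (ps::nat list)) \<le> sum_list ps"
  by (metis append_take_drop_id le_add1 sum_list_append)

lemma sum_take_Suc: "n < length ps \<Longrightarrow> sum_list (take (Suc n) (ps::nat list)) = sum_list (take n ps) + ps ! n"
  by (simp add: take_Suc_conv_app_nth)

lemma sub_len: "w' \<in> subpaths w \<Longrightarrow> 2 \<le> length w'"
  unfolding subpaths_def by auto

lemma sub_drop: assumes "w' \<in> subpaths w" "j < length w' - 1" shows "drop j w' \<in> subpaths w"
proof -
  obtain q r where qr: "q < r" "r < length w" "w' = take (r - q + 1) (drop q w)"
    using assms(1) unfolding subpaths_def by auto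
  have "drop j w' = take (r - (q + j) + 1) (drop (q + j) w)"
    using qr assms(2) by (simp add: drop_take add.commute Suc_diff_le)
  moreover have "q + j < r" using qr assms(2) by auto
  ultimately show ?thesis using qr unfolding subpaths_def by blast
qed

lemma sub_take: assumes "w' \<in> subpaths w" "0 < j" "j < length w'" shows "take (Suc j) w' \<in> subpaths w"
proof -
  obtain q r where qr: "q < r" "r < length w" "w' = take (r - q + 1) (drop q w)"
    using assms(1) unfolding subpaths_def by auto
  have lw: "length w' = r - q + 1" using qr by simp
  have "take (Suc j) w' = take ((q + j) - q + 1) (drop q w)"
    using qr assms lw by (simp add: min_def)
  moreover have "q < q + j" "q + j < length w" using qr assms by auto
  ultimately show ?thesis unfolding subpaths_def by blast
qed

lemma sub_self: "2 \<le> length w \<Longrightarrow> w \<in> subpaths w"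
  unfolding subpaths_def by (rule CollectI, rule exI[of _ 0], rule exI[of _ "length w - 1"]) auto

lemma segment_sub:
  assumes "ps \<in> ord_partitions (length w - 1)" "n < length ps"
  shows "segment w ps n \<in> subpaths w"
proof -
  define q where "q = sum_list (take n ps)"
  have pos: "0 < ps ! n" using assms unfolding ord_partitions_def by auto
  have "q + ps ! n \<le> length w - 1"
    using sum_take_Suc[OF assms(2)] sum_take_le[of "Suc n" ps] assms(1)
    unfolding q_def ord_partitions_def by simp
  then have "q < q + ps ! n" "q + ps ! n < length w" using pos by auto
  moreover have "segment w ps n = take ((q + ps ! n) - q + 1) (drop q w)"
    unfolding segment_def q_def by simp
  ultimately show ?thesis unfolding subpaths_def by blast
qed

lemma prodl_VG:
  assumes aut: "\<forall>g\<in>G. cpa_aut s t g"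
  shows "ps \<noteq> [] \<Longrightarrow> (\<forall>x\<in>set ps. 0 < x) \<Longrightarrow> sum_list ps = length w - 1 \<Longrightarrow> length xs = length ps
    \<Longrightarrow> (\<forall>n<length ps. xs ! n \<in> VG s t G (segment w ps n)) \<Longrightarrow> cpa_prodl t xs \<in> VG s t G w"
proof (induction ps arbitrary: w xs)
  case Nil then show ?case by simp
next
  case (Cons p ps)
  obtain x xs' where xs: "xs = x # xs'" using Cons.prems(4) by (cases xs) auto
  show ?case
  proof (cases "ps = []")
    case True
    then have "xs' = []" using xs Cons.prems(4) by simp
    moreover have "segment w (p # ps) 0 = w" using True Cons.prems(3) unfolding segment_def by simp
    moreover have "xs ! 0 \<in> VG s t G (segment w (p # ps) 0)" using Cons.prems(5) by simp
    ultimately show ?thesis using xs by (simp add: mult_one_left)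
  next
    case False
    obtain q r where qr: "ps = q # r" using False by (cases ps) auto
    have sp: "0 < sum_list ps" using Cons.prems(2) unfolding qr by simp
    have plt: "p < length w - 1" using Cons.prems(3) sp by simp
    have IH: "cpa_prodl t xs' \<in> VG s t G (drop p w)"
    proof (rule Cons.IH)
      show "ps \<noteq> []" by fact
      show "\<forall>x\<in>set ps. 0 < x" using Cons.prems(2) by simp
      show "sum_list ps = length (drop p w) - 1" using Cons.prems(3) by simp
      show "length xs' = length ps" using Cons.prems(4) xs by simp
      show "\<forall>n<length ps. xs' ! n \<in> VG s t G (segment (drop p w) ps n)"
      proof (intro allI impI)
        fix n assume "n < length ps"
        then have "xs ! Suc n \<in> VG s t G (segment w (p # ps) (Suc n))" using Cons.prems(5) by simp
        moreover have "segment w (p # ps) (Suc n) = segment (drop p w) ps n"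
          unfolding segment_def by (simp add: add.commute)
        ultimately show "xs' ! n \<in> VG s t G (segment (drop p w) ps n)" using xs by simp
      qed
    qed
    have x: "x \<in> VG s t G (take (Suc p) w)"
      using Cons.prems(5) xs unfolding segment_def by force
    have "cpa_mult t (cpa_prodl t xs') x \<in> VG s t G (take (Suc p) w @ tl (drop p w))"
      by (rule mult_VG[OF aut IH x])
    moreover have "take (Suc p) w @ tl (drop p w) = w"
      by (metis append_take_drop_id drop_Suc tl_drop)
    ultimately show ?thesis using xs by simp
  qed
qed

lemma segment_append:
  assumes "j < length w" "sum_list ps1 = j"
  shows "segment w (ps1 @ ps2) n = (if n < length ps1 then segment (take (Suc j) w) ps1 n
           else segment (drop j w) ps2 (n - length ps1))"
proof (cases "n < length ps1")
  case True
  define q where "q = sum_list (take n ps1)"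
  have le: "q + ps1 ! n \<le> j"
    using sum_take_Suc[OF True] sum_take_le[of "Suc n" ps1] assms unfolding q_def by simp
  have "segment w (ps1 @ ps2) n = take (ps1 ! n + 1) (drop q w)"
    unfolding segment_def q_def using True by (simp add: nth_append)
  moreover have "segment (take (Suc j) w) ps1 n = take (ps1 ! n + 1) (drop q w)"
    unfolding segment_def q_def[symmetric] using le by (simp add: drop_take min_def)
  ultimately show ?thesis using True by simp
next
  case False
  then show ?thesis using assms unfolding segment_def
    by (simp add: nth_append add.commute)
qed



lemma psi_mult:
  assumes j: "j < length w"
    and x: "x \<in> psi_image t Irr (drop j w)" and y: "y \<in> psi_image t Irr (take (Suc j) w)"
  shows "cpa_mult t x y \<in> psi_image t Irr w"
proof -
  have g: "cpa_mult t a b \<in> cpa_span (\<Union>ps\<in>ord_partitions (length w - 1).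
      {cpa_prodl t xs | xs. length xs = length ps \<and> (\<forall>n<length ps. xs ! n \<in> Irr (segment w ps n))})"
    if a: "a \<in> (\<Union>ps\<in>ord_partitions (length (drop j w) - 1).
      {cpa_prodl t xs | xs. length xs = length ps \<and> (\<forall>n<length ps. xs ! n \<in> Irr (segment (drop j w) ps n))})"
    and b: "b \<in> (\<Union>ps\<in>ord_partitions (length (take (Suc j) w) - 1).
      {cpa_prodl t xs | xs. length xs = length ps \<and> (\<forall>n<length ps. xs ! n \<in> Irr (segment (take (Suc j) w) ps n))})"
    for a b
  proof -
    from a obtain ps2 xs where ps2: "ps2 \<in> ord_partitions (length (drop j w) - 1)"
      and xs: "length xs = length ps2" "\<forall>n<length ps2. xs ! n \<in> Irr (segment (drop j w) ps2 n)"
      and a_eq: "a = cpa_prodl t xs" by blast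
    from b obtain ps1 ys where ps1: "ps1 \<in> ord_partitions (length (take (Suc j) w) - 1)"
      and ys: "length ys = length ps1" "\<forall>n<length ps1. ys ! n \<in> Irr (segment (take (Suc j) w) ps1 n)"
      and b_eq: "b = cpa_prodl t ys" by blast
    have s1: "sum_list ps1 = j" using ps1 j unfolding ord_partitions_def by simp
    have P: "ps1 @ ps2 \<in> ord_partitions (length w - 1)" using ps1 ps2 j unfolding ord_partitions_def by auto
    have L: "length (ys @ xs) = length (ps1 @ ps2)" using xs ys by simp
    have N: "\<forall>n<length (ps1 @ ps2). (ys @ xs) ! n \<in> Irr (segment w (ps1 @ ps2) n)"
    proof (intro allI impI)
      fix n assume n: "n < length (ps1 @ ps2)"
      show "(ys @ xs) ! n \<in> Irr (segment w (ps1 @ ps2) n)"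
      proof (cases "n < length ps1")
        case True then show ?thesis using ys segment_append[OF j s1] by (simp add: nth_append)
      next
        case False then show ?thesis using xs ys n segment_append[OF j s1] by (simp add: nth_append)
      qed
    qed
    have "cpa_mult t a b = cpa_prodl t (ys @ xs)" unfolding a_eq b_eq by (rule prodl_append[symmetric])
    then have "cpa_mult t a b \<in> (\<Union>ps\<in>ord_partitions (length w - 1).
      {cpa_prodl t xs | xs. length xs = length ps \<and> (\<forall>n<length ps. xs ! n \<in> Irr (segment w ps n))})"
      using P L N by blast
    then show ?thesis by (rule span_base)
  qed
  show ?thesis using bilinear_span[OF span_subspace g] x y unfolding psi_image_def by blast
qed


theorem mainTheorem2:
  fixes s t :: "'a \<Rightarrow> 'v"
    and G :: "(('v \<times> 'a list \<Rightarrow> 'k::field) \<Rightarrow> ('v \<times> 'a list \<Rightarrow> 'k)) set"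
    and w :: "'v list"
    and Irr :: "'v list \<Rightarrow> ('v \<times> 'a list \<Rightarrow> 'k) set"
  assumes "\<forall>i j. finite {a. s a = i \<and> t a = j}"
    and "cpa_aut_group s t G"
    and "homogeneous_group s t G"
    and "invariant_on_Sigma s t G"
    and "is_path_space s t w"
    and "\<forall>w' \<in> subpaths w. is_irr_space s t G w' (Irr w')"
  shows "psi_image t Irr w = VG s t G w"
proof -
  have aut: "\<forall>g\<in>G. cpa_aut s t g" using assms(2) unfolding cpa_aut_group_def by blast
  have irr: "\<And>w'. w' \<in> subpaths w \<Longrightarrow> is_irr_space s t G w' (Irr w')" using assms(6) by blast
  have len: "2 \<le> length w" using assms(5) unfolding is_path_space_def by simp
  have sub: "psi_image t Irr w \<subseteq> VG s t G w"
    unfolding psi_image_def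
  proof (rule span_least[OF VG_subspace[OF aut]])
    show "(\<Union>ps\<in>ord_partitions (length w - 1).
      {cpa_prodl t xs | xs. length xs = length ps \<and> (\<forall>n<length ps. xs ! n \<in> Irr (segment w ps n))})
      \<subseteq> VG s t G w"
    proof
      fix f assume "f \<in> (\<Union>ps\<in>ord_partitions (length w - 1).
      {cpa_prodl t xs | xs. length xs = length ps \<and> (\<forall>n<length ps. xs ! n \<in> Irr (segment w ps n))})"
      then obtain ps xs where ps: "ps \<in> ord_partitions (length w - 1)"
        and xs: "length xs = length ps" "\<forall>n<length ps. xs ! n \<in> Irr (segment w ps n)"
        and f: "f = cpa_prodl t xs" by blast
      have "\<forall>n<length ps. xs ! n \<in> VG s t G (segment w ps n)"
      proof (intro allI impI)
        fix n assume n: "n < length ps"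
        have "is_irr_space s t G (segment w ps n) (Irr (segment w ps n))"
          by (rule irr[OF segment_sub[OF ps n]])
        then show "xs ! n \<in> VG s t G (segment w ps n)" using xs n unfolding is_irr_space_def by blast
      qed
      then show "f \<in> VG s t G w" using prodl_VG[OF aut] ps xs f unfolding ord_partitions_def by blast
    qed
  qed
  have sup: "w' \<in> subpaths w \<Longrightarrow> VG s t G w' \<subseteq> psi_image t Irr w'" for w'
  proof (induction "length w'" arbitrary: w' rule: less_induct)
    case less
    have I: "is_irr_space s t G w' (Irr w')" using less.prems irr by blast
    have l2: "2 \<le> length w'" using sub_len less.prems by blast
    have sp: "cpa_subspace (psi_image t Irr w')" unfolding psi_image_def by (rule span_subspace)
    have Ipsi: "Irr w' \<subseteq> psi_image t Irr w'"
    proof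
      fix x assume x: "x \<in> Irr w'"
      let ?m = "length w' - 1"
      have "[?m] \<in> ord_partitions ?m" using l2 unfolding ord_partitions_def by auto
      moreover have "segment w' [?m] 0 = w'" unfolding segment_def using l2 by simp
      moreover have "cpa_prodl t [x] = x" by (simp add: mult_one_left)
      ultimately have "x \<in> (\<Union>ps\<in>ord_partitions (length w' - 1).
      {cpa_prodl t xs | xs. length xs = length ps \<and> (\<forall>n<length ps. xs ! n \<in> Irr (segment w' ps n))})"
        using x by (intro UN_I[of "[?m]"]) (auto intro!: exI[of _ "[x]"])
      then show "x \<in> psi_image t Irr w'" unfolding psi_image_def by (rule span_base)
    qed
    have Cpsi: "composite_inv s t G w' \<subseteq> psi_image t Irr w'"
      unfolding composite_inv_def
    proof (rule span_least[OF sp])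
      show "(\<Union>j\<in>{1..<length w' - 1}. {cpa_mult t x y |x y. x \<in> VG s t G (drop j w') \<and> y \<in> VG s t G (take (Suc j) w')})
         \<subseteq> psi_image t Irr w'"
      proof
        fix f assume "f \<in> (\<Union>j\<in>{1..<length w' - 1}. {cpa_mult t x y |x y. x \<in> VG s t G (drop j w') \<and> y \<in> VG s t G (take (Suc j) w')})"
        then obtain j x y where j: "1 \<le> j" "j < length w' - 1" and x: "x \<in> VG s t G (drop j w')"
          and y: "y \<in> VG s t G (take (Suc j) w')" and f: "f = cpa_mult t x y" by auto
        have lt1: "length (drop j w') < length w'" using j by simp
        have xp: "x \<in> psi_image t Irr (drop j w')"
          using less.hyps[OF lt1 sub_drop[OF less.prems j(2)]] x by blast
        have st: "take (Suc j) w' \<in> subpaths w" using sub_take[OF less.prems] j by auto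
        have lt2: "length (take (Suc j) w') < length w'" using j by simp
        have yp: "y \<in> psi_image t Irr (take (Suc j) w')"
          using less.hyps[OF lt2 st] y by blast
        have jl: "j < length w'" using j by simp
        show "f \<in> psi_image t Irr w'" unfolding f by (rule psi_mult[OF jl xp yp])
      qed
    qed
    show ?case
    proof
      fix f assume "f \<in> VG s t G w'"
      then obtain x y where "x \<in> Irr w'" "y \<in> composite_inv s t G w'" "f = cpa_add x y"
        using I unfolding is_irr_space_def cpa_msum_def by blast
      then show "f \<in> psi_image t Irr w'" using Ipsi Cpsi sp unfolding cpa_subspace_def by blast
    qed
  qed
  show ?thesis using sub sup[OF sub_self[OF len]] by blast
qed


end
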